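(* Let $T$ be a spherically homogeneous rooted tree in which every vertex has at least $2$ children, let $G\le\mathrm{Aut}~T$ be a weakly branch group, and let $N$ be a non-trivial normal subgroup of $G$. Then $N$ is a virtual retract of $G$ if and only if $N$ has finite index in $G$.
   Context: $\mathrm{Aut}~T$ is the group of automorphisms of $T$ fixing the root; $\mathcal{L}_n$ is the $n$th level; $T_v$ is the subtree of descendants of $v$. For $G\le\mathrm{Aut}~T$, $\mathrm{rist}_G(v)$ is the subgroup of elements of $G$ fixing every vertex outside $T_v$, and $\mathrm{Rist}_G(n)=\prod_{v\in\mathcal{L}_n}\mathrm{rist}_G(v)$. $G$ is weakly branch if it acts transitively on every level of $T$ and $\mathrm{Rist}_G(n)$ is infinite for every $n\ge1$. $H\le G$ is a virtual retract of $G$ if there is a finite-index subgroup $K\le G$ containing $H$ and a homomorphism $K\to H$ restricting to the identity on $H$. *)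

theory Defs
  imports "HOL-Algebra.Algebra" "HOL-Library.Sublist"
begin

text \<open>Spherically homogeneous rooted tree with branching sequence m:
  vertices at level n are words x_0 ... x_{n-1} with x_i < m i; the root is the
  empty word, and the parent of a vertex is obtained by deleting its last letter.\<close>

definition tverts :: "(nat \<Rightarrow> nat) \<Rightarrow> nat list set" where
  "tverts m = {xs. \<forall>i<length xs. xs ! i < m i}"

definition tlevel :: "(nat \<Rightarrow> nat) \<Rightarrow> nat \<Rightarrow> nat list set" where
  "tlevel m n = {xs \<in> tverts m. length xs = n}"

text \<open>Automorphisms of the rooted tree (fixing the root): bijections of the
  vertex set preserving levels and the parent relation; extended by the identity
  outside the vertex set so that they form a group under composition.\<close>

definition is_tree_aut :: "(nat \<Rightarrow> nat) \<Rightarrow> (nat list \<Rightarrow> nat list) \<Rightarrow> bool" where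
  "is_tree_aut m g \<longleftrightarrow>
     bij_betw g (tverts m) (tverts m) \<and>
     (\<forall>v\<in>tverts m. length (g v) = length v) \<and>
     (\<forall>v\<in>tverts m. g (butlast v) = butlast (g v)) \<and>
     (\<forall>v. v \<notin> tverts m \<longrightarrow> g v = v)"

definition AutT :: "(nat \<Rightarrow> nat) \<Rightarrow> (nat list \<Rightarrow> nat list) monoid" where
  "AutT m = \<lparr>carrier = {g. is_tree_aut m g}, monoid.mult = (\<circ>), one = id\<rparr>"

definition rist :: "(nat \<Rightarrow> nat) \<Rightarrow> (nat list \<Rightarrow> nat list) set \<Rightarrow> nat list
                      \<Rightarrow> (nat list \<Rightarrow> nat list) set" where
  "rist m G v = {g \<in> G. \<forall>w\<in>tverts m. \<not> prefix v w \<longrightarrow> g w = w}"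

text \<open>Rist_G(n): the (internal, direct) product of the rigid stabilisers of the
  vertices of level n, i.e. the subgroup they generate.\<close>

definition Rist :: "(nat \<Rightarrow> nat) \<Rightarrow> (nat list \<Rightarrow> nat list) set \<Rightarrow> nat
                      \<Rightarrow> (nat list \<Rightarrow> nat list) set" where
  "Rist m G n = generate (AutT m) (\<Union>v\<in>tlevel m n. rist m G v)"

definition level_transitive :: "(nat \<Rightarrow> nat) \<Rightarrow> (nat list \<Rightarrow> nat list) set \<Rightarrow> bool" where
  "level_transitive m G \<longleftrightarrow>
     (\<forall>n. \<forall>u\<in>tlevel m n. \<forall>w\<in>tlevel m n. \<exists>g\<in>G. g u = w)"

definition weakly_branch :: "(nat \<Rightarrow> nat) \<Rightarrow> (nat list \<Rightarrow> nat list) set \<Rightarrow> bool" where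
  "weakly_branch m G \<longleftrightarrow>
     subgroup G (AutT m) \<and> level_transitive m G \<and> (\<forall>n\<ge>1. infinite (Rist m G n))"

definition virtual_retract :: "('a, 'b) monoid_scheme \<Rightarrow> 'a set \<Rightarrow> bool" where
  "virtual_retract Gr H \<longleftrightarrow>
     (\<exists>K. subgroup K Gr \<and> H \<subseteq> K \<and> finite (rcosets\<^bsub>Gr\<^esub> K) \<and>
        (\<exists>r. r \<in> hom (Gr\<lparr>carrier := K\<rparr>) (Gr\<lparr>carrier := H\<rparr>) \<and> (\<forall>h\<in>H. r h = h)))"

end

theory Submission
  imports Defs
begin


lemma tverts_butlast: "v \<in> tverts m \<Longrightarrow> butlast v \<in> tverts m"
  by (auto simp: tverts_def nth_butlast)

lemma tverts_prefix: "v \<in> tverts m \<Longrightarrow> prefix p v \<Longrightarrow> p \<in> tverts m"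
  unfolding tverts_def prefix_def
proof clarify
  fix zs i assume h: "\<forall>i<length (p @ zs). (p @ zs) ! i < m i" "i < length p"
  then show "p ! i < m i" using h(1)[rule_format, of i] by (simp add: nth_append)
qed

lemma aut_in: "is_tree_aut m g \<Longrightarrow> v \<in> tverts m \<Longrightarrow> g v \<in> tverts m"
  unfolding is_tree_aut_def bij_betw_def by auto

lemma aut_len: "is_tree_aut m g \<Longrightarrow> v \<in> tverts m \<Longrightarrow> length (g v) = length v"
  unfolding is_tree_aut_def by auto

lemma aut_out: "is_tree_aut m g \<Longrightarrow> v \<notin> tverts m \<Longrightarrow> g v = v"
  unfolding is_tree_aut_def by auto

lemma aut_inj: "is_tree_aut m g \<Longrightarrow> g x = g y \<Longrightarrow> x = y"
proof -
  assume a: "is_tree_aut m g" and e: "g x = g y"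
  show "x = y"
  proof (cases "x \<in> tverts m"; cases "y \<in> tverts m")
    assume "x \<in> tverts m" "y \<in> tverts m" thus ?thesis using a e
      unfolding is_tree_aut_def bij_betw_def inj_on_def by blast
  next
    assume "x \<in> tverts m" "y \<notin> tverts m" thus ?thesis using a e aut_in aut_out by metis
  next
    assume "x \<notin> tverts m" "y \<in> tverts m" thus ?thesis using a e aut_in aut_out by metis
  next
    assume "x \<notin> tverts m" "y \<notin> tverts m" thus ?thesis using a e aut_out by metis
  qed
qed

lemma aut_prefix: "is_tree_aut m g \<Longrightarrow> v \<in> tverts m \<Longrightarrow> prefix p v \<Longrightarrow> prefix (g p) (g v)"
proof (induction v rule: rev_induct)
  case Nil
  then show ?case by simp
next
  case (snoc x xs)
  have "prefix xs (xs @ [x])" by simp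
  then have xs: "xs \<in> tverts m" using snoc.prems(2) tverts_prefix by blast
  have "g (butlast (xs @ [x])) = butlast (g (xs @ [x]))" using snoc.prems(1,2) unfolding is_tree_aut_def by blast
  then have gb: "g xs = butlast (g (xs @ [x]))" by simp
  show ?case
  proof (cases "p = xs @ [x]")
    case True then show ?thesis by simp
  next
    case False
    then have "prefix p xs" using snoc.prems(3) by (simp add: prefix_snoc)
    then have "prefix (g p) (g xs)" using snoc.IH snoc.prems(1) xs by blast
    moreover have "prefix (g xs) (g (xs @ [x]))" unfolding gb by (rule prefixeq_butlast)
    ultimately show ?thesis by (rule prefix_order.trans)
  qed
qed

lemma prefix_same_len: "prefix p x \<Longrightarrow> prefix q x \<Longrightarrow> length p = length q \<Longrightarrow> p = q"
proof -
  assume a: "prefix p x" "prefix q x" "length p = length q"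
  have "prefix p q" using prefix_length_prefix[OF a(1,2)] a(3) by simp
  moreover have "prefix q p" using prefix_length_prefix[OF a(2,1)] a(3) by simp
  ultimately show "p = q" by (rule prefix_order.antisym)
qed

lemma aut_moves_desc: "is_tree_aut m g \<Longrightarrow> g y \<noteq> y \<Longrightarrow> x \<in> tverts m \<Longrightarrow> prefix y x \<Longrightarrow> g x \<noteq> x"
proof
  assume a: "is_tree_aut m g" "g y \<noteq> y" "x \<in> tverts m" "prefix y x" "g x = x"
  then have y: "y \<in> tverts m" using tverts_prefix by blast
  have "prefix (g y) x" using aut_prefix[OF a(1) a(3) a(4)] a(5) by simp
  then have "g y = y" using prefix_same_len[OF _ a(4)] aut_len[OF a(1) y] by blast
  then show False using a(2) by blast
qed

lemma aut_comp: "is_tree_aut m g \<Longrightarrow> is_tree_aut m h \<Longrightarrow> is_tree_aut m (g \<circ> h)"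
proof -
  assume g: "is_tree_aut m g" and h: "is_tree_aut m h"
  show ?thesis unfolding is_tree_aut_def
  proof (intro conjI ballI allI impI)
    show "bij_betw (g \<circ> h) (tverts m) (tverts m)"
      using g h unfolding is_tree_aut_def by (metis bij_betw_trans)
  next
    fix v assume v: "v \<in> tverts m"
    show "length ((g \<circ> h) v) = length v" using g h v aut_in[OF h v] unfolding is_tree_aut_def by simp
    show "(g \<circ> h) (butlast v) = butlast ((g \<circ> h) v)" using g h v aut_in[OF h v] unfolding is_tree_aut_def by simp
  next
    fix v assume "v \<notin> tverts m" then show "(g \<circ> h) v = v" using g h unfolding is_tree_aut_def by simp
  qed
qed

lemma aut_id: "is_tree_aut m id"
  unfolding is_tree_aut_def by auto

lemma aut_linv: "is_tree_aut m g \<Longrightarrow> \<exists>f. is_tree_aut m f \<and> f \<circ> g = id"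
proof -
  assume a: "is_tree_aut m g"
  define f where "f = (\<lambda>v. if v \<in> tverts m then inv_into (tverts m) g v else v)"
  have bij: "bij_betw g (tverts m) (tverts m)" using a unfolding is_tree_aut_def by auto
  have fg: "f (g v) = v" for v
  proof (cases "v \<in> tverts m")
    case True
    then show ?thesis using bij aut_in[OF a] by (simp add: f_def bij_betw_inv_into_left)
  next
    case False
    then show ?thesis using aut_out[OF a] by (simp add: f_def)
  qed
  have gf: "v \<in> tverts m \<Longrightarrow> g (f v) = v" for v
    using bij by (simp add: f_def bij_betw_inv_into_right)
  have fin: "v \<in> tverts m \<Longrightarrow> f v \<in> tverts m" for v
    using bij by (simp add: f_def bij_betw_def inv_into_into)
  have "is_tree_aut m f"
    unfolding is_tree_aut_def
  proof (intro conjI ballI allI impI)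
    show "bij_betw f (tverts m) (tverts m)"
    proof -
      have "bij_betw (inv_into (tverts m) g) (tverts m) (tverts m)"
        using bij by (metis bij_betw_inv_into)
      then show ?thesis by (rule bij_betw_cong[THEN iffD1, rotated]) (simp add: f_def)
    qed
  next
    fix v assume v: "v \<in> tverts m"
    show "length (f v) = length v" using aut_len[OF a fin[OF v]] gf[OF v] by simp
    have "g (butlast (f v)) = butlast v"
      using a fin[OF v] gf[OF v] unfolding is_tree_aut_def by metis
    then show "f (butlast v) = butlast (f v)" using fg by metis
  next
    fix v assume "v \<notin> tverts m" then show "f v = v" by (simp add: f_def)
  qed
  then show ?thesis using fg by (intro exI[of _ f]) auto
qed

lemma AutT_group: "group (AutT m)"
  apply (rule groupI)
      apply (auto simp: AutT_def aut_comp aut_id)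
  using aut_linv by blast



lemma A_carrier: "g \<in> carrier (AutT m) \<longleftrightarrow> is_tree_aut m g"
  by (simp add: AutT_def)

lemma A_mult[simp]: "g \<otimes>\<^bsub>AutT m\<^esub> h = g \<circ> h"
  by (simp add: AutT_def)

lemma A_one[simp]: "\<one>\<^bsub>AutT m\<^esub> = id"
  by (simp add: AutT_def)

lemma inv_props:
  assumes "is_tree_aut m f"
  shows "is_tree_aut m ((inv\<^bsub>AutT m\<^esub> f))" "(inv\<^bsub>AutT m\<^esub> f) (f x) = x" "f ((inv\<^bsub>AutT m\<^esub> f) x) = x"
proof -
  interpret A: group "AutT m" by (rule AutT_group)
  have f: "f \<in> carrier (AutT m)" using assms by (simp add: A_carrier)
  show "is_tree_aut m ((inv\<^bsub>AutT m\<^esub> f))" using A.inv_closed[OF f] by (simp add: A_carrier)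
  have "(inv\<^bsub>AutT m\<^esub> f) \<circ> f = id" using A.l_inv[OF f] by simp
  then show "(inv\<^bsub>AutT m\<^esub> f) (f x) = x" by (metis comp_apply id_apply)
  have "f \<circ> (inv\<^bsub>AutT m\<^esub> f) = id" using A.r_inv[OF f] by simp
  then show "f ((inv\<^bsub>AutT m\<^esub> f) x) = x" by (metis comp_apply id_apply)
qed

lemma rist_fixes_root:
  assumes "a \<in> rist m G z" "is_tree_aut m a" "z \<in> tverts m"
  shows "a z = z"
proof (cases "z = []")
  case True
  then show ?thesis using aut_len[OF assms(2,3)] by simp
next
  case False
  have fix_out: "\<And>w. w \<in> tverts m \<Longrightarrow> \<not> prefix z w \<Longrightarrow> a w = w"
    using assms(1) by (auto simp: rist_def)
  have "\<not> prefix z (butlast z)"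
  proof
    assume "prefix z (butlast z)"
    then have "length z \<le> length (butlast z)" by (rule prefix_length_le)
    moreover have "0 < length z" using False by simp
    moreover have "length (butlast z) = length z - 1" by simp
    ultimately show False by linarith
  qed
  then have "a (butlast z) = butlast z" using fix_out tverts_butlast assms(3) by blast
  then have bl: "butlast (a z) = butlast z" using assms(2,3) unfolding is_tree_aut_def by metis
  show ?thesis
  proof (rule ccontr)
    assume ne: "a z \<noteq> z"
    have "\<not> prefix z (a z)" using ne prefix_same_len[of z "a z" "a z"] aut_len[OF assms(2,3)] by auto
    then have "a (a z) = a z" using fix_out aut_in[OF assms(2,3)] by blast
    then show False using ne aut_inj[OF assms(2)] by blast
  qed
qed

lemma rist_inv_fix:
  assumes "a \<in> rist m G z" "is_tree_aut m a" "z \<in> tverts m" "w \<in> tverts m" "\<not> prefix z w"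
  shows "(inv\<^bsub>AutT m\<^esub> a) w = w"
proof -
  let ?ia = "inv\<^bsub>AutT m\<^esub> a"
  have fix_out: "\<And>w. w \<in> tverts m \<Longrightarrow> \<not> prefix z w \<Longrightarrow> a w = w"
    using assms(1) by (auto simp: rist_def)
  have iw: "?ia w \<in> tverts m" using aut_in inv_props(1)[OF assms(2)] assms(4) by blast
  have e: "a (?ia w) = w" using inv_props(3)[OF assms(2)] .
  show ?thesis
  proof (cases "prefix z (?ia w)")
    case True
    then have "prefix (a z) w" using aut_prefix[OF assms(2) iw True] e by simp
    then show ?thesis using rist_fixes_root[OF assms(1-3)] assms(5) by simp
  next
    case False
    then show ?thesis using fix_out[OF iw] e by simp
  qed
qed

lemma GP:
  assumes g: "is_tree_aut m g" and k: "is_tree_aut m k" and a: "is_tree_aut m a"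
    and ar: "a \<in> rist m G z" and z: "z \<in> tverts m"
    and gz: "g z \<noteq> z" and kz: "k z \<noteq> z" and kgz: "k z \<noteq> g z" and ax: "a x \<noteq> x"
    and comm: "g \<circ> (a \<circ> k \<circ> (inv\<^bsub>AutT m\<^esub> a) \<circ> (inv\<^bsub>AutT m\<^esub> k))
             = (a \<circ> k \<circ> (inv\<^bsub>AutT m\<^esub> a) \<circ> (inv\<^bsub>AutT m\<^esub> k)) \<circ> g"
  shows False
proof -
  let ?ia = "inv\<^bsub>AutT m\<^esub> a" and ?ik = "inv\<^bsub>AutT m\<^esub> k"
  have fix_out: "\<And>w. w \<in> tverts m \<Longrightarrow> \<not> prefix z w \<Longrightarrow> a w = w"
    using ar by (auto simp: rist_def)
  have x: "x \<in> tverts m" using ax aut_out[OF a] by blast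
  have zx: "prefix z x" using fix_out[OF x] ax by blast
  have ik: "is_tree_aut m ?ik" by (rule inv_props(1)[OF k])
  have nopre: "\<And>p q w. length p = length q \<Longrightarrow> p \<noteq> q \<Longrightarrow> prefix p w \<Longrightarrow> \<not> prefix q w"
    using prefix_same_len by metis
  have ikz: "?ik z \<noteq> z" using kz inv_props(3)[OF k, of z] by metis
  have "prefix (?ik z) (?ik x)" using aut_prefix[OF ik x zx] .
  then have "\<not> prefix z (?ik x)" using nopre[of "?ik z" z] ikz aut_len[OF ik z] by metis
  then have "?ia (?ik x) = ?ik x" using rist_inv_fix[OF ar a z] aut_in[OF ik x] by blast
  then have c1: "a (k (?ia (?ik x))) = a x" using inv_props(3)[OF k] by simp
  have gzv: "g z \<in> tverts m" using aut_in[OF g z] .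
  have ikgz: "?ik (g z) \<noteq> z" using kgz inv_props(3)[OF k, of "g z"] by metis
  have "prefix (?ik (g z)) (?ik (g x))" using aut_prefix[OF ik aut_in[OF g x] aut_prefix[OF g x zx]] .
  moreover have "length (?ik (g z)) = length z" using aut_len[OF ik gzv] aut_len[OF g z] by simp
  ultimately have "\<not> prefix z (?ik (g x))" using nopre ikgz by metis
  moreover have "?ik (g x) \<in> tverts m" using aut_in[OF ik aut_in[OF g x]] .
  ultimately have "?ia (?ik (g x)) = ?ik (g x)" using rist_inv_fix[OF ar a z] by blast
  then have e1: "k (?ia (?ik (g x))) = g x" using inv_props(3)[OF k] by simp
  have "\<not> prefix z (g x)" using nopre[of "g z" z "g x"] aut_prefix[OF g x zx] gz aut_len[OF g z] by metis
  then have "a (g x) = g x" using fix_out aut_in[OF g x] by blast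
  with e1 have c2: "a (k (?ia (?ik (g x)))) = g x" by simp
  have "g (a (k (?ia (?ik x)))) = a (k (?ia (?ik (g x))))" using fun_cong[OF comm, of x] by simp
  then have "g (a x) = g x" using c1 c2 by simp
  then show False using aut_inj[OF g] ax by blast
qed



lemma wb_sub: "weakly_branch m G \<Longrightarrow> subgroup G (AutT m)"
  unfolding weakly_branch_def by (elim conjE)

lemma wb_aut: "weakly_branch m G \<Longrightarrow> g \<in> G \<Longrightarrow> is_tree_aut m g"
proof -
  assume wb: "weakly_branch m G" and g: "g \<in> G"
  have "G \<subseteq> carrier (AutT m)" by (rule subgroup.subset[OF wb_sub[OF wb]])
  then show ?thesis using g A_carrier by blast
qed

lemma wb_inv: "weakly_branch m G \<Longrightarrow> g \<in> G \<Longrightarrow> (inv\<^bsub>AutT m\<^esub> g) \<in> G"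
  by (rule subgroup.m_inv_closed[OF wb_sub])

lemma wb_mult: "weakly_branch m G \<Longrightarrow> g \<in> G \<Longrightarrow> h \<in> G \<Longrightarrow> g \<circ> h \<in> G"
proof -
  assume "weakly_branch m G" "g \<in> G" "h \<in> G"
  then have "g \<otimes>\<^bsub>AutT m\<^esub> h \<in> G" by (intro subgroup.m_closed[OF wb_sub])
  then show ?thesis by simp
qed

lemma GG_mult[simp]: "monoid.mult ((AutT m)\<lparr>carrier := S\<rparr>) g h = g \<circ> h"
  by (simp add: AutT_def)

lemma GG_one[simp]: "monoid.one ((AutT m)\<lparr>carrier := S\<rparr>) = id"
  by (simp add: AutT_def)

lemma GG_inv: "weakly_branch m G \<Longrightarrow> g \<in> G \<Longrightarrow> inv\<^bsub>((AutT m)\<lparr>carrier := G\<rparr>)\<^esub> g = inv\<^bsub>AutT m\<^esub> g"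
  by (rule group.m_inv_consistent[OF AutT_group wb_sub])

lemma N_sub: "N \<lhd> (AutT m)\<lparr>carrier := G\<rparr> \<Longrightarrow> N \<subseteq> G"
proof -
  assume nN: "N \<lhd> (AutT m)\<lparr>carrier := G\<rparr>"
  have "N \<subseteq> carrier ((AutT m)\<lparr>carrier := G\<rparr>)" by (rule subgroup.subset[OF normal_imp_subgroup[OF nN]])
  then show ?thesis by simp
qed

lemma N_inv: "weakly_branch m G \<Longrightarrow> N \<lhd> (AutT m)\<lparr>carrier := G\<rparr> \<Longrightarrow> n \<in> N \<Longrightarrow> (inv\<^bsub>AutT m\<^esub> n) \<in> N"
proof -
  assume wb: "weakly_branch m G" and nN: "N \<lhd> (AutT m)\<lparr>carrier := G\<rparr>" and n: "n \<in> N"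
  have "inv\<^bsub>((AutT m)\<lparr>carrier := G\<rparr>)\<^esub> n \<in> N"
    using subgroup.m_inv_closed[OF normal_imp_subgroup[OF nN] n] .
  moreover have "n \<in> G" using N_sub[OF nN] n by blast
  ultimately show ?thesis by (simp only: GG_inv[OF wb])
qed

lemma N_mult: "N \<lhd> (AutT m)\<lparr>carrier := G\<rparr> \<Longrightarrow> n \<in> N \<Longrightarrow> n' \<in> N \<Longrightarrow> n \<circ> n' \<in> N"
proof -
  assume nN: "N \<lhd> (AutT m)\<lparr>carrier := G\<rparr>" and n: "n \<in> N" "n' \<in> N"
  have "n \<otimes>\<^bsub>((AutT m)\<lparr>carrier := G\<rparr>)\<^esub> n' \<in> N"
    using subgroup.m_closed[OF normal_imp_subgroup[OF nN] n] .
  then show ?thesis by (simp only: GG_mult)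
qed

lemma N_id: "N \<lhd> (AutT m)\<lparr>carrier := G\<rparr> \<Longrightarrow> id \<in> N"
proof -
  assume nN: "N \<lhd> (AutT m)\<lparr>carrier := G\<rparr>"
  have "\<one>\<^bsub>((AutT m)\<lparr>carrier := G\<rparr>)\<^esub> \<in> N"
    using subgroup.one_closed[OF normal_imp_subgroup[OF nN]] .
  then show ?thesis by (simp only: GG_one)
qed

lemma N_conj: "weakly_branch m G \<Longrightarrow> N \<lhd> (AutT m)\<lparr>carrier := G\<rparr> \<Longrightarrow> h \<in> G \<Longrightarrow> n \<in> N
   \<Longrightarrow> h \<circ> n \<circ> (inv\<^bsub>AutT m\<^esub> h) \<in> N"
proof -
  assume wb: "weakly_branch m G" and nN: "N \<lhd> (AutT m)\<lparr>carrier := G\<rparr>" and h: "h \<in> G" and n: "n \<in> N"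
  have "h \<otimes>\<^bsub>((AutT m)\<lparr>carrier := G\<rparr>)\<^esub> n \<otimes>\<^bsub>((AutT m)\<lparr>carrier := G\<rparr>)\<^esub> inv\<^bsub>((AutT m)\<lparr>carrier := G\<rparr>)\<^esub> h \<in> N"
  proof (rule normal.inv_op_closed2[OF nN _ n])
    show "h \<in> carrier ((AutT m)\<lparr>carrier := G\<rparr>)" using h by simp
  qed
  then show ?thesis by (simp only: GG_inv[OF wb h] GG_mult)
qed

lemma RN:
  assumes wb: "weakly_branch m G" and z: "z \<in> tverts m" and lz: "length z \<ge> 1"
  shows "\<exists>a\<in>rist m G z. \<exists>x. a x \<noteq> x"
proof -
  interpret A: group "AutT m" by (rule AutT_group)
  have inf: "infinite (Rist m G (length z))" using wb lz by (simp add: weakly_branch_def)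
  have "\<exists>v\<in>tlevel m (length z). \<exists>a0\<in>rist m G v. a0 \<noteq> id"
  proof (rule ccontr)
    assume "\<not> ?thesis"
    then have "(\<Union>v\<in>tlevel m (length z). rist m G v) \<subseteq> {\<one>\<^bsub>AutT m\<^esub>}" by auto
    then have "Rist m G (length z) \<subseteq> {\<one>\<^bsub>AutT m\<^esub>}" unfolding Rist_def
      by (rule A.generate_subgroup_incl[OF _ A.triv_subgroup])
    then have "finite (Rist m G (length z))" using finite_subset by blast
    with inf show False by simp
  qed
  then obtain v a0 where v: "v \<in> tlevel m (length z)" and a0: "a0 \<in> rist m G v" and a0n: "a0 \<noteq> id"
    by blast
  obtain p where p: "a0 p \<noteq> p" using a0n by (auto simp: fun_eq_iff)
  have zl: "z \<in> tlevel m (length z)" using z by (simp add: tlevel_def)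
  obtain h where h: "h \<in> G" "h v = z"
    using wb v zl unfolding weakly_branch_def level_transitive_def by blast
  have ht: "is_tree_aut m h" using wb_aut[OF wb h(1)] .
  have a0G: "a0 \<in> G" using a0 by (simp add: rist_def)
  have a0t: "is_tree_aut m a0" using wb_aut[OF wb a0G] .
  have vt: "v \<in> tverts m" using v by (simp add: tlevel_def)
  let ?ih = "inv\<^bsub>AutT m\<^esub> h"
  define a where "a = h \<circ> a0 \<circ> ?ih"
  have aG: "a \<in> G" unfolding a_def using wb_mult[OF wb wb_mult[OF wb h(1) a0G] wb_inv[OF wb h(1)]] .
  have "a \<in> rist m G z"
    unfolding rist_def
  proof (intro CollectI conjI ballI impI aG)
    fix w assume w: "w \<in> tverts m" and nw: "\<not> prefix z w"
    have w': "?ih w \<in> tverts m" using aut_in[OF inv_props(1)[OF ht] w] .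
    have hw: "h (?ih w) = w" using inv_props(3)[OF ht] .
    have "\<not> prefix v (?ih w)"
    proof
      assume "prefix v (?ih w)"
      then have "prefix (h v) (h (?ih w))" using aut_prefix[OF ht w'] by blast
      then show False using nw h(2) hw by simp
    qed
    then have "a0 (?ih w) = ?ih w" using a0 w' by (simp add: rist_def)
    then show "a w = w" using hw by (simp add: a_def)
  qed
  moreover have "a (h p) \<noteq> h p"
  proof -
    have "a (h p) = h (a0 p)" using inv_props(2)[OF ht] by (simp add: a_def)
    then show ?thesis using p aut_inj[OF ht] by metis
  qed
  ultimately show ?thesis by blast
qed

lemma ext_tverts: "v \<in> tverts m \<Longrightarrow> (\<And>i. m i \<ge> 2) \<Longrightarrow> v @ replicate k 0 \<in> tverts m"
  unfolding tverts_def
proof (clarify)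
  fix i assume h: "\<forall>i<length v. v ! i < m i" "\<And>i. m i \<ge> 2" "i < length (v @ replicate k 0)"
  show "(v @ replicate k 0) ! i < m i"
  proof (cases "i < length v")
    case True then show ?thesis using h(1) by (simp add: nth_append)
  next
    case False then show ?thesis using h(2)[of i] h(3) by (simp add: nth_append)
  qed
qed



lemma helper:
  assumes wb: "weakly_branch m G" and nN: "N \<lhd> (AutT m)\<lparr>carrier := G\<rparr>"
    and g: "g \<in> G" and comm: "\<And>n. n \<in> N \<Longrightarrow> g \<circ> n = n \<circ> g"
    and k: "k \<in> N" and z: "z \<in> tverts m" and lz: "length z \<ge> 1"
    and gz: "g z \<noteq> z" and kz: "k z \<noteq> z" and kgz: "k z \<noteq> g z"
  shows False
proof -
  obtain a x where a: "a \<in> rist m G z" and ax: "a x \<noteq> x" using RN[OF wb z lz] by blast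
  have aG: "a \<in> G" using a by (simp add: rist_def)
  have kG: "k \<in> G" using N_sub[OF nN] k by blast
  have c: "a \<circ> k \<circ> (inv\<^bsub>AutT m\<^esub> a) \<circ> (inv\<^bsub>AutT m\<^esub> k) \<in> N"
    by (rule N_mult[OF nN N_conj[OF wb nN aG k] N_inv[OF wb nN k]])
  show False
    by (rule GP[OF wb_aut[OF wb g] wb_aut[OF wb kG] wb_aut[OF wb aG] a z gz kz kgz ax comm[OF c]])
qed

lemma KL:
  assumes m2: "\<And>n. m n \<ge> 2" and wb: "weakly_branch m G" and nN: "N \<lhd> (AutT m)\<lparr>carrier := G\<rparr>"
    and nt: "N \<noteq> {id}" and g: "g \<in> G" and comm: "\<And>n. n \<in> N \<Longrightarrow> g \<circ> n = n \<circ> g"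
  shows "g = id"
proof (rule ccontr)
  assume gid: "g \<noteq> id"
  have gt: "is_tree_aut m g" using wb_aut[OF wb g] .
  obtain w where gw: "g w \<noteq> w" using gid by (auto simp: fun_eq_iff)
  have w: "w \<in> tverts m" using gw aut_out[OF gt] by blast
  obtain n0 where n0: "n0 \<in> N" "n0 \<noteq> id" using nt N_id[OF nN] by blast
  have n0G: "n0 \<in> G" using N_sub[OF nN] n0(1) by blast
  have n0t: "is_tree_aut m n0" using wb_aut[OF wb n0G] .
  obtain u where nu: "n0 u \<noteq> u" using n0(2) by (auto simp: fun_eq_iff)
  have u: "u \<in> tverts m" using nu aut_out[OF n0t] by blast
  define L where "L = max (max (length w) (length u)) 1"
  define y where "y = w @ replicate (L - length w) 0"
  define u' where "u' = u @ replicate (L - length u) 0"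
  have y: "y \<in> tverts m" unfolding y_def using ext_tverts[OF w m2] .
  have u'v: "u' \<in> tverts m" unfolding u'_def using ext_tverts[OF u m2] .
  have ly: "length y = L" unfolding y_def L_def by simp
  have lu: "length u' = L" unfolding u'_def L_def by simp
  have L1: "L \<ge> 1" unfolding L_def by simp
  have gy: "g y \<noteq> y" using aut_moves_desc[OF gt gw y] unfolding y_def by simp
  have nu': "n0 u' \<noteq> u'" using aut_moves_desc[OF n0t nu u'v] unfolding u'_def by simp
  have "u' \<in> tlevel m L" "y \<in> tlevel m L" using u'v lu y ly by (auto simp: tlevel_def)
  then obtain h1 where h1: "h1 \<in> G" "h1 u' = y"
    using wb unfolding weakly_branch_def level_transitive_def by blast
  have h1t: "is_tree_aut m h1" using wb_aut[OF wb h1(1)] .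
  define n where "n = h1 \<circ> n0 \<circ> (inv\<^bsub>AutT m\<^esub> h1)"
  have nN': "n \<in> N" unfolding n_def by (rule N_conj[OF wb nN h1(1) n0(1)])
  have nG: "n \<in> G" using N_sub[OF nN] nN' by blast
  have nt': "is_tree_aut m n" using wb_aut[OF wb nG] .
  have ny: "n y \<noteq> y"
  proof
    assume "n y = y"
    then have "h1 (n0 u') = h1 u'" using inv_props(2)[OF h1t, of u'] h1(2) by (simp add: n_def)
    then show False using nu' aut_inj[OF h1t] by blast
  qed
  obtain hh z where hh: "hh \<in> rist m G y" and hz: "hh z \<noteq> z"
    using RN[OF wb y] ly L1 by auto
  have hhG: "hh \<in> G" using hh by (simp add: rist_def)
  have hht: "is_tree_aut m hh" using wb_aut[OF wb hhG] .
  have hfix: "\<And>v. v \<in> tverts m \<Longrightarrow> \<not> prefix y v \<Longrightarrow> hh v = v" using hh by (simp add: rist_def)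
  have z: "z \<in> tverts m" using hz aut_out[OF hht] by blast
  have yz: "prefix y z" using hfix[OF z] hz by blast
  have lz: "length z \<ge> 1" using prefix_length_le[OF yz] ly L1 by simp
  have gz: "g z \<noteq> z" by (rule aut_moves_desc[OF gt gy z yz])
  have nz: "n z \<noteq> z" by (rule aut_moves_desc[OF nt' ny z yz])
  show False
  proof (cases "n z = g z")
    case False
    show False by (rule helper[OF wb nN g comm nN' z lz gz nz False])
  next
    case True
    let ?ih = "inv\<^bsub>AutT m\<^esub> hh"
    define k where "k = hh \<circ> n \<circ> ?ih"
    have kN: "k \<in> N" unfolding k_def by (rule N_conj[OF wb nN hhG nN'])
    define z2 where "z2 = ?ih z"
    have hz2: "hh z2 = z" unfolding z2_def by (rule inv_props(3)[OF hht])
    have z2: "z2 \<in> tverts m" unfolding z2_def by (rule aut_in[OF inv_props(1)[OF hht] z])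
    have z2z: "z2 \<noteq> z" using hz2 hz by auto
    have yz2: "prefix y z2"
    proof (rule ccontr)
      assume "\<not> prefix y z2"
      then have "hh z2 = z2" using hfix z2 by blast
      then show False using hz2 z2z by simp
    qed
    have nz2: "n z2 \<in> tverts m" using aut_in[OF nt' z2] .
    have "prefix (n y) (n z2)" using aut_prefix[OF nt' z2 yz2] .
    then have npre: "\<not> prefix y (n z2)"
      using prefix_same_len[of "n y" "n z2" y] aut_len[OF nt' y] ny by metis
    have kz: "k z = n z2" using hfix[OF nz2 npre] by (simp add: k_def z2_def)
    have kz1: "k z \<noteq> z" using kz npre yz by auto
    have kz2: "k z \<noteq> g z" using kz True z2z aut_inj[OF nt'] by metis
    show False by (rule helper[OF wb nN g comm kN z lz gz kz1 kz2])
  qed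
qed



theorem lemma3p3:
  fixes m :: "nat \<Rightarrow> nat"
    and G N :: "(nat list \<Rightarrow> nat list) set"
  assumes "\<And>n. m n \<ge> 2"
    and "weakly_branch m G"
    and "N \<lhd> (AutT m)\<lparr>carrier := G\<rparr>"
    and "N \<noteq> {id}"
  shows "virtual_retract ((AutT m)\<lparr>carrier := G\<rparr>) N
           \<longleftrightarrow> finite (rcosets\<^bsub>(AutT m)\<lparr>carrier := G\<rparr>\<^esub> N)"
proof -
  have wb: "weakly_branch m G" by (rule assms(2))
  have nN: "N \<lhd> (AutT m)\<lparr>carrier := G\<rparr>" by (rule assms(3))
  have subN: "subgroup N ((AutT m)\<lparr>carrier := G\<rparr>)" by (rule normal_imp_subgroup[OF nN])
  show ?thesis
  proof
    assume "virtual_retract ((AutT m)\<lparr>carrier := G\<rparr>) N"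
    then obtain K r where K: "subgroup K ((AutT m)\<lparr>carrier := G\<rparr>)" "N \<subseteq> K"
        "finite (rcosets\<^bsub>(AutT m)\<lparr>carrier := G\<rparr>\<^esub> K)"
      and r: "r \<in> hom (((AutT m)\<lparr>carrier := G\<rparr>)\<lparr>carrier := K\<rparr>) (((AutT m)\<lparr>carrier := G\<rparr>)\<lparr>carrier := N\<rparr>)"
        "\<forall>h\<in>N. r h = h"
      unfolding virtual_retract_def by blast
    have KG0: "K \<subseteq> carrier ((AutT m)\<lparr>carrier := G\<rparr>)" by (rule subgroup.subset[OF K(1)])
    then have KG: "K \<subseteq> G" by simp
    have rN: "\<And>x. x \<in> K \<Longrightarrow> r x \<in> N" using r(1) unfolding hom_def by (auto simp: Pi_def)
    have rm: "\<And>x y. x \<in> K \<Longrightarrow> y \<in> K \<Longrightarrow> r (x \<circ> y) = r x \<circ> r y"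
      using r(1) unfolding hom_def by simp
    have Kc: "\<And>x y. x \<in> K \<Longrightarrow> y \<in> K \<Longrightarrow> x \<circ> y \<in> K"
    proof -
      fix x y assume "x \<in> K" "y \<in> K"
      then have "x \<otimes>\<^bsub>((AutT m)\<lparr>carrier := G\<rparr>)\<^esub> y \<in> K" by (rule subgroup.m_closed[OF K(1)])
      then show "x \<circ> y \<in> K" by (simp only: GG_mult)
    qed
    have Ki: "\<And>x. x \<in> K \<Longrightarrow> (inv\<^bsub>AutT m\<^esub> x) \<in> K"
    proof -
      fix x assume x: "x \<in> K"
      then have "inv\<^bsub>((AutT m)\<lparr>carrier := G\<rparr>)\<^esub> x \<in> K" by (rule subgroup.m_inv_closed[OF K(1)])
      moreover have "x \<in> G" using x KG by blast
      ultimately show "(inv\<^bsub>AutT m\<^esub> x) \<in> K" by (simp only: GG_inv[OF wb])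
    qed
    have "K \<subseteq> N"
    proof
      fix k assume k: "k \<in> K"
      define rk where "rk = r k"
      have rkN: "rk \<in> N" unfolding rk_def by (rule rN[OF k])
      have rkK: "rk \<in> K" using rkN K(2) by blast
      have rkG: "rk \<in> G" using rkK KG by blast
      have rkt: "is_tree_aut m rk" by (rule wb_aut[OF wb rkG])
      define mm where "mm = k \<circ> (inv\<^bsub>AutT m\<^esub> rk)"
      have mmK: "mm \<in> K" unfolding mm_def by (rule Kc[OF k Ki[OF rkK]])
      have mmG: "mm \<in> G" using mmK KG by blast
      have mmt: "is_tree_aut m mm" by (rule wb_aut[OF wb mmG])
      have mrk: "mm \<circ> rk = k" by (rule ext) (simp add: mm_def inv_props(2)[OF rkt])
      have "r k = r mm \<circ> r rk" using rm[OF mmK rkK] mrk by simp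
      then have e: "rk = r mm \<circ> rk" using r(2) rkN by (simp add: rk_def)
      have rmm: "r mm = id"
      proof (rule ext)
        fix x
        have "r mm (rk ((inv\<^bsub>AutT m\<^esub> rk) x)) = rk ((inv\<^bsub>AutT m\<^esub> rk) x)"
          using fun_cong[OF e, of "(inv\<^bsub>AutT m\<^esub> rk) x"] by simp
        then show "r mm x = id x" using inv_props(3)[OF rkt] by simp
      qed
      have commm: "\<And>n. n \<in> N \<Longrightarrow> mm \<circ> n = n \<circ> mm"
      proof -
        fix n assume n: "n \<in> N"
        have nK: "n \<in> K" using n K(2) by blast
        have nG: "n \<in> G" using nK KG by blast
        have nt: "is_tree_aut m n" by (rule wb_aut[OF wb nG])
        define q where "q = mm \<circ> n \<circ> (inv\<^bsub>AutT m\<^esub> mm) \<circ> (inv\<^bsub>AutT m\<^esub> n)"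
        have qN: "q \<in> N" unfolding q_def
          by (rule N_mult[OF nN N_conj[OF wb nN mmG n] N_inv[OF wb nN n]])
        have qK: "q \<in> K" using qN K(2) by blast
        have e1: "q \<circ> n \<circ> mm = mm \<circ> n"
          by (rule ext) (simp add: q_def inv_props(2)[OF nt] inv_props(2)[OF mmt])
        have "r (q \<circ> n \<circ> mm) = r q \<circ> r n \<circ> r mm" using rm Kc qK nK mmK by simp
        also have "\<dots> = q \<circ> n" using r(2) qN n rmm by simp
        finally have e2: "r (q \<circ> n \<circ> mm) = q \<circ> n" .
        have "r (mm \<circ> n) = n" using rm[OF mmK nK] rmm r(2) n by simp
        with e1 e2 have qn: "q \<circ> n = n" by simp
        have qid: "q = id"
        proof (rule ext)
          fix x
          have "q (n ((inv\<^bsub>AutT m\<^esub> n) x)) = n ((inv\<^bsub>AutT m\<^esub> n) x)" using fun_cong[OF qn] by simp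
          then show "q x = id x" using inv_props(3)[OF nt] by simp
        qed
        have "n \<circ> mm = mm \<circ> n" using e1 qid by simp
        then show "mm \<circ> n = n \<circ> mm" by simp
      qed
      have "mm = id" by (rule KL[OF assms(1) wb nN assms(4) mmG commm])
      then have "k = rk" using mrk by simp
      then show "k \<in> N" using rkN by simp
    qed
    with K(2) have "K = N" by blast
    with K(3) show "finite (rcosets\<^bsub>(AutT m)\<lparr>carrier := G\<rparr>\<^esub> N)" by simp
  next
    assume fin: "finite (rcosets\<^bsub>(AutT m)\<lparr>carrier := G\<rparr>\<^esub> N)"
    show "virtual_retract ((AutT m)\<lparr>carrier := G\<rparr>) N" unfolding virtual_retract_def
    proof (rule exI[of _ N], intro conjI)
      show "subgroup N ((AutT m)\<lparr>carrier := G\<rparr>)" by (rule subN)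
      show "N \<subseteq> N" by (rule subset_refl)
      show "finite (rcosets\<^bsub>(AutT m)\<lparr>carrier := G\<rparr>\<^esub> N)" by (rule fin)
      show "\<exists>r. r \<in> hom (((AutT m)\<lparr>carrier := G\<rparr>)\<lparr>carrier := N\<rparr>) (((AutT m)\<lparr>carrier := G\<rparr>)\<lparr>carrier := N\<rparr>)
            \<and> (\<forall>h\<in>N. r h = h)"
      proof (rule exI[of _ "\<lambda>x. x"], intro conjI)
        show "(\<lambda>x. x) \<in> hom (((AutT m)\<lparr>carrier := G\<rparr>)\<lparr>carrier := N\<rparr>) (((AutT m)\<lparr>carrier := G\<rparr>)\<lparr>carrier := N\<rparr>)"
          unfolding hom_def by simp
        show "\<forall>h\<in>N. h = h" by simp
      qed
    qed
  qed
qed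

end
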